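(* For $\lambda>0$ and $c>0$, let $V\sim\mathrm{Exp}(\lambda)$, let $V_1,V_2$ be independent copies of $V$, $V_{(1:2)}=\min(V_1,V_2)$, $V_{(2:2)}=\max(V_1,V_2)$, and for $p_0\ge0$, $r\in[0,1]$ define the creator's expected profit $P(p_0,r)=R(p_0,r)-c$, where $$R(p_0,r)=\begin{cases}2p_0+2r\,\mathbb{E}[V] & \text{if } p_0\le (1-r)\mathbb{E}[V_{(1:2)}],\\ p_0+r\,\mathbb{E}[V_{(2:2)}]+p_0\Pr[V_{(1:2)}>p_0] & \text{if } (1-r)\mathbb{E}[V_{(1:2)}]<p_0\le(1-r)\mathbb{E}[V_{(2:2)}],\\ 2p_0\Pr[V>p_0] & \text{if } p_0>(1-r)\mathbb{E}[V_{(2:2)}].\end{cases}$$ Let $u_c^*=\sup_{p_0\ge0,r\in[0,1]}P(p_0,r)$ and $u_{c,r=0}^*=\sup_{p_0\ge0}P(p_0,0)$. Then the set $\mathbb{T}=\{(\lambda,c):\ u_c^*\ge0,\ u_{c,r=0}^*<0,\ \lambda>0,\ c>0\}$ is non-empty.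
   Context: $R$ is the expected revenue of a creator selling a two-unit NFT collection at common mint price $p_0$ with royalty rate $r$ in the presence of a risk-neutral speculator who buys 2, 1 or 0 units in the three price regions respectively; $c$ is the creator's cost. Trade occurs iff the optimal profit is nonnegative. *)

theory Defs
  imports "HOL-Probability.Probability"
begin

definition exp_law :: "real \<Rightarrow> real measure" where
  "exp_law l = density lborel (exponential_density l)"

definition exp_pair_law :: "real \<Rightarrow> (real \<times> real) measure" where
  "exp_pair_law l = exp_law l \<Otimes>\<^sub>M exp_law l"

definition EV :: "real \<Rightarrow> real" where
  "EV l = (\<integral>x. x \<partial>exp_law l)"

definition Emin :: "real \<Rightarrow> real" where
  "Emin l = (\<integral>z. min (fst z) (snd z) \<partial>exp_pair_law l)"

definition Emax :: "real \<Rightarrow> real" where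
  "Emax l = (\<integral>z. max (fst z) (snd z) \<partial>exp_pair_law l)"

definition PrV_gt :: "real \<Rightarrow> real \<Rightarrow> real" where
  "PrV_gt l p = measure (exp_law l) {x. x > p}"

definition PrMin_gt :: "real \<Rightarrow> real \<Rightarrow> real" where
  "PrMin_gt l p = measure (exp_pair_law l) {z. min (fst z) (snd z) > p}"

definition revenue :: "real \<Rightarrow> real \<Rightarrow> real \<Rightarrow> real" where
  "revenue l p0 r =
    (if p0 \<le> (1 - r) * Emin l then 2 * p0 + 2 * r * EV l
     else if p0 \<le> (1 - r) * Emax l then p0 + r * Emax l + p0 * PrMin_gt l p0
     else 2 * p0 * PrV_gt l p0)"

definition profit :: "real \<Rightarrow> real \<Rightarrow> real \<Rightarrow> real \<Rightarrow> real" where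
  "profit l c p0 r = revenue l p0 r - c"

definition u_star :: "real \<Rightarrow> real \<Rightarrow> real" where
  "u_star l c = (SUP pr \<in> {0..} \<times> {0..1}. profit l c (fst pr) (snd pr))"

definition u_star_r0 :: "real \<Rightarrow> real \<Rightarrow> real" where
  "u_star_r0 l c = (SUP p0 \<in> {0..}. profit l c p0 0)"

end

theory Submission
  imports Defs
begin

lemma S_prob: "prob_space (exp_law 1)"
  unfolding exp_law_def by (rule prob_space_exponential_density) simp

lemma sets_S[simp, measurable_cong]: "sets (exp_law 1) = sets borel"
  unfolding exp_law_def by simp

lemma space_S[simp]: "space (exp_law 1) = UNIV"
  unfolding exp_law_def by simp

lemma S_dist: "distributed (exp_law 1) lborel (\<lambda>x. x) (exponential_density 1)"
  unfolding distributed_def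
  apply (intro conjI)
  apply (subst distr_id2) apply simp apply (simp add: exp_law_def)
  apply simp apply simp done

lemma S_cdf: "0 \<le> a \<Longrightarrow> emeasure (exp_law 1) {..a} = 1 - ennreal (exp (- a))"
proof -
  assume "0 \<le> a"
  then have "emeasure (exp_law 1) {..a} = ennreal (1 - exp (- a))"
    unfolding exp_law_def by (simp add: emeasure_erlang_density erlang_CDF_0)
  also have "\<dots> = ennreal 1 - ennreal (exp (- a))" by (subst ennreal_minus) auto
  finally show ?thesis by simp
qed

lemma meas_fst: "fst \<in> borel_measurable (exp_pair_law 1)" unfolding exp_pair_law_def by measurable
lemma meas_snd: "snd \<in> borel_measurable (exp_pair_law 1)" unfolding exp_pair_law_def by measurable

lemma S_UNIV[simp]: "emeasure (exp_law 1) UNIV = 1"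
  using prob_space.emeasure_space_1[OF S_prob] by simp

interpretation P: pair_prob_space "exp_law 1" "exp_law 1"
  by (simp add: S_prob pair_prob_space_def pair_sigma_finite_def prob_space_imp_sigma_finite)

lemma fst_dist: "distributed (exp_pair_law 1) lborel fst (exponential_density 1)"
proof (rule exponential_distributedI)
  show "fst \<in> borel_measurable (exp_pair_law 1)" unfolding exp_pair_law_def by measurable
  fix a :: real assume a: "0 \<le> a"
  have "{x \<in> space (exp_pair_law 1). fst x \<le> a} = {..a} \<times> space (exp_law 1)"
    by (auto simp: exp_pair_law_def space_pair_measure)
  then show "emeasure (exp_pair_law 1) {x \<in> space (exp_pair_law 1). fst x \<le> a} = 1 - ennreal (exp (- a * 1))"
    using a by (simp add: exp_pair_law_def sigma_finite_measure.emeasure_pair_measure_Times[OF prob_space_imp_sigma_finite[OF S_prob]] prob_space.emeasure_space_1[OF S_prob] S_cdf)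
qed simp

lemma snd_dist: "distributed (exp_pair_law 1) lborel snd (exponential_density 1)"
proof (rule exponential_distributedI)
  show "snd \<in> borel_measurable (exp_pair_law 1)" unfolding exp_pair_law_def by measurable
  fix a :: real assume a: "0 \<le> a"
  have "{x \<in> space (exp_pair_law 1). snd x \<le> a} = space (exp_law 1) \<times> {..a}"
    by (auto simp: exp_pair_law_def space_pair_measure)
  then show "emeasure (exp_pair_law 1) {x \<in> space (exp_pair_law 1). snd x \<le> a} = 1 - ennreal (exp (- a * 1))"
    using a by (simp add: exp_pair_law_def sigma_finite_measure.emeasure_pair_measure_Times[OF prob_space_imp_sigma_finite[OF S_prob]] S_cdf)
qed simp

lemma M_prob: "prob_space (exp_pair_law 1)"
  unfolding exp_pair_law_def by (simp add: S_prob prob_space_pair)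

lemma distr_fst_S: "distr (exp_pair_law 1) borel fst = exp_law 1"
proof -
  have "distr (exp_pair_law 1) borel fst = distr (exp_law 1 \<Otimes>\<^sub>M exp_law 1) (exp_law 1) fst"
    by (rule distr_cong) (auto simp: exp_pair_law_def)
  also have "\<dots> = exp_law 1" by (rule prob_space.distr_pair_fst[OF S_prob])
  finally show ?thesis .
qed

lemma indep: "prob_space.indep_var (exp_pair_law 1) borel fst borel snd"
proof -
  interpret M: prob_space "exp_pair_law 1" by (rule M_prob)
  show ?thesis
  proof (subst M.indep_var_distribution_eq, intro conjI meas_fst meas_snd)
    have d2: "distr (exp_pair_law 1) borel snd = exp_law 1"
    proof (rule measure_eqI)
      fix A assume A: "A \<in> sets (distr (exp_pair_law 1) borel snd)"
      then have A': "A \<in> sets borel" by simp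
      have "snd -` A \<inter> space (exp_pair_law 1) = space (exp_law 1) \<times> A"
        by (auto simp: exp_pair_law_def space_pair_measure)
      then show "emeasure (distr (exp_pair_law 1) borel snd) A = emeasure (exp_law 1) A"
        using A' by (simp add: emeasure_distr exp_pair_law_def
          sigma_finite_measure.emeasure_pair_measure_Times[OF prob_space_imp_sigma_finite[OF S_prob]])
    qed simp
    have "distr (exp_pair_law 1) (borel \<Otimes>\<^sub>M borel) (\<lambda>x. (fst x, snd x)) = distr (exp_pair_law 1) (borel \<Otimes>\<^sub>M borel) (\<lambda>x. x)"
      by simp
    also have "\<dots> = exp_pair_law 1"
      by (rule distr_id2, unfold exp_pair_law_def, rule sets_pair_measure_cong, simp_all)
    finally have X: "distr (exp_pair_law 1) (borel \<Otimes>\<^sub>M borel) (\<lambda>x. (fst x, snd x)) = exp_pair_law 1" .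
    show "distr (exp_pair_law 1) borel fst \<Otimes>\<^sub>M distr (exp_pair_law 1) borel snd =
       distr (exp_pair_law 1) (borel \<Otimes>\<^sub>M borel) (\<lambda>x. (fst x, snd x))"
      by (subst distr_fst_S, subst d2, subst X, simp add: exp_pair_law_def)
  qed
qed

lemma min_dist: "distributed (exp_pair_law 1) lborel (\<lambda>x. min (fst x) (snd x)) (exponential_density 2)"
  using prob_space.exponential_distributed_min[OF M_prob _ _ fst_dist snd_dist indep] by simp

lemma Emin: "Emin 1 = 1/2"
  unfolding Emin_def using prob_space.exponential_distributed_expectation[OF M_prob _ min_dist] by simp

lemma EV: "EV 1 = 1"
  unfolding EV_def using prob_space.exponential_distributed_expectation[OF S_prob _ S_dist] by simp

lemma int_fst: "integrable (exp_pair_law 1) fst"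
  using prob_space.erlang_ith_moment_integrable[OF M_prob _ fst_dist, of 1] by simp
lemma int_snd: "integrable (exp_pair_law 1) snd"
  using prob_space.erlang_ith_moment_integrable[OF M_prob _ snd_dist, of 1] by simp
lemma int_min: "integrable (exp_pair_law 1) (\<lambda>x. min (fst x) (snd x))"
  using prob_space.erlang_ith_moment_integrable[OF M_prob _ min_dist, of 1] by simp

lemma Emax: "Emax 1 = 3/2"
proof -
  have "Emax 1 = (\<integral>z. fst z + snd z - min (fst z) (snd z) \<partial>exp_pair_law 1)"
    unfolding Emax_def by (rule Bochner_Integration.integral_cong) auto
  also have "\<dots> = (\<integral>z. fst z \<partial>exp_pair_law 1) + (\<integral>z. snd z \<partial>exp_pair_law 1) - Emin 1"
    unfolding Emin_def using int_fst int_snd int_min by simp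
  also have "\<dots> = 3/2"
    using prob_space.exponential_distributed_expectation[OF M_prob _ fst_dist]
      prob_space.exponential_distributed_expectation[OF M_prob _ snd_dist] Emin by simp
  finally show ?thesis .
qed

lemma PrV: "0 \<le> p \<Longrightarrow> PrV_gt 1 p = exp (- p)"
  unfolding PrV_gt_def using prob_space.exponential_distributedD_gt[OF S_prob S_dist, of p] by simp

lemma PrMin: "0 \<le> p \<Longrightarrow> PrMin_gt 1 p = exp (- 2 * p)"
  unfolding PrMin_gt_def using prob_space.exponential_distributedD_gt[OF M_prob min_dist, of p]
  by (simp add: exp_pair_law_def space_pair_measure)

lemma pexp1: "(p::real) * exp (- p) \<le> exp (- 1)"
proof -
  have "p \<le> exp (p - 1)" using exp_ge_add_one_self[of "p - 1"] by simp
  then have "p * exp (- p) \<le> exp (p - 1) * exp (- p)" by (simp add: mult_right_mono)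
  also have "\<dots> = exp (- 1)" by (simp add: exp_add[symmetric])
  finally show ?thesis .
qed

lemma pexp2: "(p::real) * exp (- 2 * p) \<le> exp (- 1) / 2"
proof -
  have "2 * p \<le> exp (2 * p - 1)" using exp_ge_add_one_self[of "2 * p - 1"] by simp
  then have "2 * p * exp (- 2 * p) \<le> exp (2 * p - 1) * exp (- 2 * p)" by (simp add: mult_right_mono)
  also have "\<dots> = exp (- 1)" by (simp add: exp_add[symmetric])
  finally show ?thesis by simp
qed

lemma rev0: "0 \<le> p \<Longrightarrow> revenue 1 p 0 \<le> 3/2 + exp (- 1) / 2"
proof -
  assume p: "0 \<le> p"
  have e0: "0 < exp (- 1::real)" by simp
  have e1: "exp (- 1::real) < 1" by simp
  have A: "2 * p * exp (- p) \<le> 2 * exp (-1)" using pexp1[of p] by simp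
  have B: "p * exp (- (2 * p)) \<le> exp (-1) / 2" using pexp2[of p] by simp
  have R: "revenue 1 p 0 = (if p \<le> 1/2 then 2*p else if p \<le> 3/2 then p + p * exp (- (2 * p)) else 2 * p * exp (- p))"
    unfolding revenue_def Emin Emax PrV[OF p] PrMin[OF p] by simp
  show ?thesis
    unfolding R using e0 e1 A B by (simp split: if_split, linarith)
qed

lemma rev_bd: "0 \<le> p \<Longrightarrow> 0 \<le> r \<Longrightarrow> r \<le> 1 \<Longrightarrow> revenue 1 p r \<le> 5"
proof -
  assume a: "0 \<le> p" "0 \<le> r" "r \<le> 1"
  have e: "exp (- (2 * p)) \<le> 1" using a by simp
  have B: "p * exp (- (2 * p)) \<le> p" using a e by (simp add: mult_left_le)
  have e1: "exp (- 1::real) < 1" by simp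
  have A: "2 * p * exp (- p) \<le> 2 * exp (-1)" using pexp1[of p] by simp
  have R: "revenue 1 p r = (if p \<le> (1 - r)/2 then 2*p + 2 * r else if p \<le> (1 - r) * (3/2) then p + r * (3/2) + p * exp (- (2 * p)) else 2 * p * exp (- p))"
    unfolding revenue_def Emin Emax EV PrV[OF a(1)] PrMin[OF a(1)] by simp
  show ?thesis
    unfolding R using A B e1 a by (simp split: if_split, smt (verit) mult_left_le)
qed

theorem corollary6:
  shows "{(l, c). u_star (l::real) (c::real) \<ge> 0 \<and> u_star_r0 l c < 0 \<and> l > 0 \<and> c > 0} \<noteq> {}"
proof -
  have bdd: "bdd_above ((\<lambda>pr. profit 1 2 (fst pr) (snd pr)) ` ({0..} \<times> {0..1}))"
  proof (rule bdd_aboveI[where M=3])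
    fix x assume "x \<in> (\<lambda>pr. profit 1 2 (fst pr) (snd pr)) ` ({0..} \<times> {0..1})"
    then obtain p r where "x = profit 1 2 p r" "0 \<le> p" "0 \<le> r" "r \<le> (1::real)" by auto
    then show "x \<le> 3" using rev_bd[of p r] by (simp add: profit_def)
  qed
  have "profit 1 2 0 1 = 0"
    by (simp add: profit_def revenue_def EV Emin)
  moreover have "profit 1 2 (fst (0::real, 1::real)) (snd (0::real, 1::real)) \<le> u_star 1 2"
    unfolding u_star_def by (rule cSUP_upper[OF _ bdd]) simp
  ultimately have U: "0 \<le> u_star 1 2" by simp
  have V: "u_star_r0 1 2 \<le> 3/2 + exp (- 1) / 2 - 2"
    unfolding u_star_r0_def
  proof (rule cSUP_least)
    fix p :: real assume "p \<in> {0..}"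
    then show "profit 1 2 p 0 \<le> 3/2 + exp (- 1) / 2 - 2" using rev0[of p] by (simp add: profit_def)
  qed simp
  have "exp (- 1 :: real) < 1" by simp
  with V have "u_star_r0 1 2 < 0" by linarith
  with U have "(1::real, 2::real) \<in> {(l, c). u_star (l::real) (c::real) \<ge> 0 \<and> u_star_r0 l c < 0 \<and> l > 0 \<and> c > 0}" by simp
  then show ?thesis by blast
qed

end
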